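(* Let $\epsilon_1>0$, let $u$ be a utility function on contexts of sensitivity $\Delta u\le1$ (context population size or overlap with a fixed starting context, $-\infty$ on non-matching contexts), and let $C_V$ be a starting context with $f_M(D_{C_V},V)=\mathrm{true}$. Consider the Random Walk Sampling algorithm: initialize the multiset $C_M=[C_V]$ and current context $C=C_V$; repeatedly pick uniformly at random a context $C_i$ connected to $C$ (among those not yet rejected); if $f_M(D_{C_i},V)=\mathrm{true}$, append $C_i$ to $C_M$ and set $C\leftarrow C_i$, otherwise discard $C_i$; stop when $|C_M|>n$ or no candidate connected context remains; finally output $\mathrm{Exp}^{\epsilon_1}_u(D,C_M)$. Then this algorithm satisfies $(2\epsilon_1,\ COE_M(\cdot,V))$-Output Constrained Differential Privacy.
   Context: Dataset $D$ over categorical attributes $A_1,\dots,A_m$ (domain sizes $|A_i|$, all possible values) and metric attribute $M$; $t=\sum_i|A_i|$. A context is a binary vector of length $t$, $c_{ij}=1$ meaning the $j$-th value of $A_i$ is selected; $D_C$ is the set of tuples of $D$ whose value in every $A_i$ is selected by $C$. Two contexts are connected if their Hamming distance is $1$. $f_M(D_C,V)$ is a deterministic test of whether record $V$ is an outlier in $D_C$ w.r.t. $M$; $COE_M(D,V)$ is the set of contexts $C$ with $V\in D_C$ and $f_M(D_C,V)=\mathrm{true}$. Sensitivity $\Delta u=\max|u(D_1,r)-u(D_2,r)|$ over neighboring datasets (differing by adding/removing one record) and outputs $r$. $\mathrm{Exp}^{\epsilon}_u(D,\mathcal R)$ outputs $r\in\mathcal R$ with probability $\exp(\epsilon u(D,r)/(2\Delta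 u))/\sum_{r'\in\mathcal R}\exp(\epsilon u(D,r')/(2\Delta u))$. $D_1,D_2$ are $f$-neighbors if they differ by adding/removing one record and $f(D_1)=f(D_2)\ne\emptyset$; $\mathcal M$ satisfies $(\epsilon,f)$-Output Constrained Differential Privacy if $\Pr[\mathcal M(D_1)\in S]\le e^\epsilon\Pr[\mathcal M(D_2)\in S]$ for all $f$-neighbors and all output sets $S$. *)

theory Defs
  imports "HOL-Probability.Probability"
begin

text \<open>A context is a binary vector of length t = sum of the domain sizes; we represent it
  as the set of selected positions (i,j), meaning value j of attribute A_i is selected
  (i < m, j < sz i).\<close>
type_synonym ctx = "(nat \<times> nat) set"

definition ctx_space :: "nat \<Rightarrow> (nat \<Rightarrow> nat) \<Rightarrow> ctx set" where
  "ctx_space m sz = Pow {(i, j). i < m \<and> j < sz i}"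

definition connected :: "ctx \<Rightarrow> ctx \<Rightarrow> bool" where
  "connected C C' \<longleftrightarrow> card ((C - C') \<union> (C' - C)) = 1"

text \<open>Records: val r i is the (index of the) value of attribute A_i in record r;
  the metric attribute is only accessed through the outlier test f.\<close>
definition restrict_ds :: "nat \<Rightarrow> ('r \<Rightarrow> nat \<Rightarrow> nat) \<Rightarrow> 'r multiset \<Rightarrow> ctx \<Rightarrow> 'r multiset" where
  "restrict_ds m val D C = filter_mset (\<lambda>r. \<forall>i<m. (i, val r i) \<in> C) D"

definition matches :: "nat \<Rightarrow> ('r \<Rightarrow> nat \<Rightarrow> nat) \<Rightarrow> 'r \<Rightarrow> ctx \<Rightarrow> bool" where
  "matches m val V C \<longleftrightarrow> (\<forall>i<m. (i, val V i) \<in> C)"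

definition COE :: "nat \<Rightarrow> (nat \<Rightarrow> nat) \<Rightarrow> ('r \<Rightarrow> nat \<Rightarrow> nat) \<Rightarrow> ('r multiset \<Rightarrow> 'r \<Rightarrow> bool)
    \<Rightarrow> 'r multiset \<Rightarrow> 'r \<Rightarrow> ctx set" where
  "COE m sz val f D V = {C \<in> ctx_space m sz.
      V \<in># restrict_ds m val D C \<and> f (restrict_ds m val D C) V}"

definition neighbors :: "'r multiset \<Rightarrow> 'r multiset \<Rightarrow> bool" where
  "neighbors D1 D2 \<longleftrightarrow> (\<exists>x. D2 = add_mset x D1) \<or> (\<exists>x. D1 = add_mset x D2)"

definition sensitivity :: "ctx set \<Rightarrow> ('r multiset \<Rightarrow> ctx \<Rightarrow> real) \<Rightarrow> ereal" where
  "sensitivity R u = (SUP (D1, D2, C) \<in> {(D1, D2, C). neighbors D1 D2 \<and> C \<in> R}.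
       ereal \<bar>u D1 C - u D2 C\<bar>)"

definition exp_weight :: "real \<Rightarrow> real \<Rightarrow> ereal \<Rightarrow> real" where
  "exp_weight \<epsilon> du x = (case x of ereal y \<Rightarrow> exp (\<epsilon> * y / (2 * du)) | _ \<Rightarrow> 0)"

definition exp_mech :: "real \<Rightarrow> real \<Rightarrow> ('c \<Rightarrow> ereal) \<Rightarrow> 'c multiset \<Rightarrow> 'c pmf" where
  "exp_mech \<epsilon> du s M = embed_pmf (\<lambda>r. of_nat (count M r) * exp_weight \<epsilon> du (s r)
       / sum_mset (image_mset (\<lambda>r'. exp_weight \<epsilon> du (s r')) M))"

text \<open>One step of the random walk; state = (C_M, current C, rejected contexts).\<close>
definition rw_step :: "ctx set \<Rightarrow> (ctx \<Rightarrow> bool) \<Rightarrow> nat \<Rightarrow> ctx multiset \<times> ctx \<times> ctx set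
    \<Rightarrow> (ctx multiset \<times> ctx \<times> ctx set) pmf" where
  "rw_step Ctx test n st = (case st of (CM, C, Rej) \<Rightarrow>
     (let cand = {C' \<in> Ctx. connected C C' \<and> C' \<notin> Rej} in
      if size CM > n \<or> cand = {} then return_pmf st
      else bind_pmf (pmf_of_set cand) (\<lambda>Ci.
        return_pmf (if test Ci then (add_mset Ci CM, Ci, Rej) else (CM, C, insert Ci Rej)))))"

text \<open>Each non-terminal step increases size C_M (at most n times) or the rejected set
  (at most card Ctx times), so n + card Ctx + 1 iterations reach termination;
  further steps are the identity.\<close>
definition rw_walk :: "ctx set \<Rightarrow> (ctx \<Rightarrow> bool) \<Rightarrow> nat \<Rightarrow> ctx \<Rightarrow> ctx multiset pmf" where
  "rw_walk Ctx test n CV = map_pmf fst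
     (((\<lambda>p. bind_pmf p (rw_step Ctx test n)) ^^ (n + card Ctx + 1)) (return_pmf ({#CV#}, CV, {})))"

definition util_ext :: "nat \<Rightarrow> ('r \<Rightarrow> nat \<Rightarrow> nat) \<Rightarrow> 'r \<Rightarrow> ('r multiset \<Rightarrow> ctx \<Rightarrow> real)
    \<Rightarrow> 'r multiset \<Rightarrow> ctx \<Rightarrow> ereal" where
  "util_ext m val V u D C = (if matches m val V C then ereal (u D C) else -\<infinity>)"

definition rws_mech :: "nat \<Rightarrow> (nat \<Rightarrow> nat) \<Rightarrow> ('r \<Rightarrow> nat \<Rightarrow> nat) \<Rightarrow> ('r multiset \<Rightarrow> 'r \<Rightarrow> bool)
    \<Rightarrow> 'r \<Rightarrow> ('r multiset \<Rightarrow> ctx \<Rightarrow> real) \<Rightarrow> real \<Rightarrow> nat \<Rightarrow> ctx \<Rightarrow> 'r multiset \<Rightarrow> ctx pmf" where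
  "rws_mech m sz val f V u \<epsilon>1 n CV D =
     (let Ctx = ctx_space m sz;
          du = real_of_ereal (sensitivity {C \<in> Ctx. matches m val V C} u)
      in bind_pmf (rw_walk Ctx (\<lambda>C. C \<in> COE m sz val f D V) n CV)
           (\<lambda>CM. exp_mech \<epsilon>1 du (util_ext m val V u D) CM))"

definition f_neighbors :: "('r multiset \<Rightarrow> 'o set) \<Rightarrow> 'r multiset \<Rightarrow> 'r multiset \<Rightarrow> bool" where
  "f_neighbors F D1 D2 \<longleftrightarrow> neighbors D1 D2 \<and> F D1 = F D2 \<and> F D1 \<noteq> {}"

definition ocdp :: "real \<Rightarrow> ('r multiset \<Rightarrow> 'o set) \<Rightarrow> ('r multiset \<Rightarrow> 'c pmf) \<Rightarrow> bool" where
  "ocdp \<epsilon> F M \<longleftrightarrow> (\<forall>D1 D2 S. f_neighbors F D1 D2 \<longrightarrow>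
      measure_pmf.prob (M D1) S \<le> exp \<epsilon> * measure_pmf.prob (M D2) S)"

end

theory Submission
  imports Defs
begin

lemma sum_mset_count_gen:
  fixes g :: "'a \<Rightarrow> real"
  assumes "finite A" "set_mset M \<subseteq> A"
  shows "sum_mset (image_mset g M) = (\<Sum>x\<in>A. of_nat (count M x) * g x)"
  using assms(2)
proof (induction M)
  case empty then show ?case by simp
next
  case (add a M)
  have aA: "a \<in> A" using add.prems by auto
  have "(\<Sum>x\<in>A. of_nat (count (add_mset a M) x) * g x)
      = (\<Sum>x\<in>A. of_nat (count M x) * g x + (if x = a then g x else 0))"
    by (intro sum.cong) (auto simp: algebra_simps)
  also have "\<dots> = (\<Sum>x\<in>A. of_nat (count M x) * g x) + g a"
    using aA assms(1) by (simp add: sum.distrib sum.delta)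
  finally show ?case using add by simp
qed

lemma exp_weight_pos: "0 < exp_weight e d (ereal y)"
  by (simp add: exp_weight_def)

lemma exp_mech_pmf:
  assumes "M \<noteq> {#}" "\<forall>r\<in>#M. \<exists>y. s r = ereal y"
  shows "pmf (exp_mech e d s M) r = of_nat (count M r) * exp_weight e d (s r)
       / sum_mset (image_mset (\<lambda>r'. exp_weight e d (s r')) M)"
proof -
  define w where "w = (\<lambda>r. exp_weight e d (s r))"
  define Z where "Z = sum_mset (image_mset w M)"
  have wpos: "r \<in># M \<Longrightarrow> 0 < w r" for r using assms(2) exp_weight_pos w_def by metis
  have Zeq: "Z = (\<Sum>x\<in>set_mset M. of_nat (count M x) * w x)"
    unfolding Z_def by (rule sum_mset_count_gen) auto
  obtain a where a: "a \<in># M" using assms(1) by (meson multiset_nonemptyE)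
  have "0 < Z" unfolding Zeq
    by (rule sum_pos2[where i=a]) (use a wpos in \<open>auto intro!: mult_nonneg_nonneg less_imp_le\<close>)
  have nn: "0 \<le> of_nat (count M x) * w x / Z" for x
    using \<open>0 < Z\<close> wpos by (cases "x \<in># M") (auto simp: not_in_iff intro!: divide_nonneg_pos less_imp_le)
  have "(\<integral>\<^sup>+x. ennreal (of_nat (count M x) * w x / Z) \<partial>count_space UNIV)
        = (\<Sum>x\<in>set_mset M. ennreal (of_nat (count M x) * w x / Z))"
    by (rule nn_integral_count_space') (auto simp: not_in_iff)
  also have "\<dots> = ennreal (\<Sum>x\<in>set_mset M. of_nat (count M x) * w x / Z)"
    using nn by (simp add: sum_ennreal)
  also have "(\<Sum>x\<in>set_mset M. of_nat (count M x) * w x / Z) = 1"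
    using \<open>0 < Z\<close> by (simp add: sum_divide_distrib[symmetric] Zeq[symmetric])
  finally have one: "(\<integral>\<^sup>+x. ennreal (of_nat (count M x) * w x / Z) \<partial>count_space UNIV) = 1" by simp
  show ?thesis
    unfolding exp_mech_def
    using pmf_embed_pmf[of "\<lambda>r. of_nat (count M r) * w r / Z", OF nn one]
    by (simp add: w_def Z_def)
qed


lemma exp_mech_set:
  assumes "M \<noteq> {#}" "\<forall>r\<in>#M. \<exists>y. s r = ereal y"
  shows "set_pmf (exp_mech e d s M) \<subseteq> set_mset M"
proof
  fix x assume "x \<in> set_pmf (exp_mech e d s M)"
  then have "pmf (exp_mech e d s M) x \<noteq> 0" by (simp add: set_pmf_iff)
  then show "x \<in># M" using exp_mech_pmf[OF assms, of e d x] by (auto simp: not_in_iff)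
qed

lemma exp_mech_ratio:
  assumes "M \<noteq> {#}" "\<forall>r\<in>#M. \<exists>y. s1 r = ereal y" "\<forall>r\<in>#M. \<exists>y. s2 r = ereal y"
    and "0 \<le> k"
    and "\<forall>r\<in>#M. exp_weight e d (s1 r) \<le> k * exp_weight e d (s2 r) \<and>
                 exp_weight e d (s2 r) \<le> k * exp_weight e d (s1 r)"
  shows "pmf (exp_mech e d s1 M) r \<le> k * k * pmf (exp_mech e d s2 M) r"
proof -
  define w1 where "w1 = (\<lambda>r. exp_weight e d (s1 r))"
  define w2 where "w2 = (\<lambda>r. exp_weight e d (s2 r))"
  have w1pos: "r \<in># M \<Longrightarrow> 0 < w1 r" for r using assms(2) exp_weight_pos w1_def by metis
  have w2pos: "r \<in># M \<Longrightarrow> 0 < w2 r" for r using assms(3) exp_weight_pos w2_def by metis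
  define Z1 where "Z1 = sum_mset (image_mset w1 M)"
  define Z2 where "Z2 = sum_mset (image_mset w2 M)"
  have Z1eq: "Z1 = (\<Sum>x\<in>set_mset M. of_nat (count M x) * w1 x)"
    unfolding Z1_def by (rule sum_mset_count_gen) auto
  have Z2eq: "Z2 = (\<Sum>x\<in>set_mset M. of_nat (count M x) * w2 x)"
    unfolding Z2_def by (rule sum_mset_count_gen) auto
  obtain a where a: "a \<in># M" using assms(1) by (meson multiset_nonemptyE)
  have "0 < Z1" unfolding Z1eq
    by (rule sum_pos2[where i=a]) (use a w1pos in \<open>auto intro!: mult_nonneg_nonneg less_imp_le\<close>)
  have "0 < Z2" unfolding Z2eq
    by (rule sum_pos2[where i=a]) (use a w2pos in \<open>auto intro!: mult_nonneg_nonneg less_imp_le\<close>)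
  have "Z2 \<le> (\<Sum>x\<in>set_mset M. of_nat (count M x) * (k * w1 x))"
    unfolding Z2eq using assms(5) by (intro sum_mono mult_left_mono) (auto simp: w1_def w2_def)
  also have "\<dots> = k * Z1" unfolding Z1eq by (simp add: sum_distrib_left algebra_simps)
  finally have Z21: "Z2 \<le> k * Z1" .
  show ?thesis
  proof (cases "r \<in># M")
    case False then show ?thesis
      using exp_mech_pmf[OF assms(1,2), of e d r] exp_mech_pmf[OF assms(1,3), of e d r]
      by (simp add: not_in_iff)
  next
    case True
    have p1: "pmf (exp_mech e d s1 M) r = of_nat (count M r) * w1 r / Z1"
      using exp_mech_pmf[OF assms(1,2), of e d r] by (simp add: w1_def Z1_def)
    have p2: "pmf (exp_mech e d s2 M) r = of_nat (count M r) * w2 r / Z2"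
      using exp_mech_pmf[OF assms(1,3), of e d r] by (simp add: w2_def Z2_def)
    have "of_nat (count M r) * w1 r / Z1 \<le> of_nat (count M r) * (k * w2 r) / Z1"
      using True assms(5) \<open>0 < Z1\<close> by (intro divide_right_mono mult_left_mono) (auto simp: w1_def w2_def)
    also have "\<dots> \<le> of_nat (count M r) * (k * w2 r) * k / Z2"
    proof -
      have nn: "0 \<le> of_nat (count M r) * (k * w2 r)" using w2pos[OF True] assms(4) by simp
      have "1 / Z1 \<le> k / Z2" using Z21 \<open>0 < Z1\<close> \<open>0 < Z2\<close> by (simp add: field_simps)
      then have "of_nat (count M r) * (k * w2 r) * (1 / Z1) \<le> of_nat (count M r) * (k * w2 r) * (k / Z2)"
        using nn by (rule mult_left_mono)
      then show ?thesis by simp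
    qed
    finally show ?thesis unfolding p1 p2 by (simp add: algebra_simps)
  qed
qed

lemma prob_le_pointwise:
  fixes p q :: "'a pmf"
  assumes "finite A" "set_pmf p \<subseteq> A" "set_pmf q \<subseteq> A" "\<And>x. pmf p x \<le> c * pmf q x"
  shows "measure_pmf.prob p S \<le> c * measure_pmf.prob q S"
proof -
  have "measure_pmf.prob p S = measure_pmf.prob p (S \<inter> A)"
    using assms(2) by (intro measure_prob_cong_0) (auto simp: set_pmf_eq)
  also have "\<dots> = (\<Sum>x\<in>S \<inter> A. pmf p x)" using assms(1) by (simp add: measure_measure_pmf_finite)
  also have "\<dots> \<le> (\<Sum>x\<in>S \<inter> A. c * pmf q x)" by (intro sum_mono assms(4))
  also have "\<dots> = c * measure_pmf.prob q (S \<inter> A)"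
    using assms(1) by (simp add: measure_measure_pmf_finite sum_distrib_left)
  also have "measure_pmf.prob q (S \<inter> A) = measure_pmf.prob q S"
    using assms(3) by (intro measure_prob_cong_0) (auto simp: set_pmf_eq)
  finally show ?thesis .
qed

lemma prob_bind_le:
  assumes "\<And>x S. x \<in> set_pmf W \<Longrightarrow> measure_pmf.prob (E1 x) S \<le> c * measure_pmf.prob (E2 x) S"
    and "0 \<le> c"
  shows "measure_pmf.prob (bind_pmf W E1) S \<le> c * measure_pmf.prob (bind_pmf W E2) S"
proof -
  have "ennreal (measure_pmf.prob (bind_pmf W E1) S) = emeasure (bind_pmf W E1) S"
    by (simp add: measure_pmf.emeasure_eq_measure)
  also have "\<dots> = (\<integral>\<^sup>+x. emeasure (E1 x) S \<partial>W)" by simp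
  also have "\<dots> \<le> (\<integral>\<^sup>+x. ennreal c * emeasure (E2 x) S \<partial>W)"
  proof (rule nn_integral_mono_AE)
    show "AE x in measure_pmf W. emeasure (E1 x) S \<le> ennreal c * emeasure (E2 x) S"
      unfolding AE_measure_pmf_iff
    proof safe
      fix x assume "x \<in> set_pmf W"
      then have "ennreal (measure_pmf.prob (E1 x) S) \<le> ennreal (c * measure_pmf.prob (E2 x) S)"
        using assms by (intro ennreal_leI) auto
      then show "emeasure (E1 x) S \<le> ennreal c * emeasure (E2 x) S"
        using assms(2) by (simp add: measure_pmf.emeasure_eq_measure ennreal_mult)
    qed
  qed
  also have "\<dots> = ennreal c * (\<integral>\<^sup>+x. emeasure (E2 x) S \<partial>W)" by (rule nn_integral_cmult) auto
  also have "\<dots> = ennreal c * emeasure (bind_pmf W E2) S" by simp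
  also have "\<dots> = ennreal (c * measure_pmf.prob (bind_pmf W E2) S)"
    using assms(2) by (simp only: measure_pmf.emeasure_eq_measure ennreal_mult[OF assms(2) measure_nonneg])
  finally show ?thesis using assms(2) by (simp add: ennreal_le_iff mult_nonneg_nonneg)
qed


lemma finite_ctx_space: "finite (ctx_space m sz)"
proof -
  have "{(i, j). i < m \<and> j < sz i} \<subseteq> Sigma {..<m} (\<lambda>i. {..<sz i})" by auto
  then have "finite {(i, j). i < m \<and> j < sz i}" by (rule finite_subset) auto
  then show ?thesis unfolding ctx_space_def by simp
qed

lemma rw_step_inv:
  assumes "finite Ctx" "\<forall>C\<in>Ctx. test C \<longrightarrow> C \<in> R"
    and "fst st0 \<noteq> {#} \<and> set_mset (fst st0) \<subseteq> R"
    and "st \<in> set_pmf (rw_step Ctx test n st0)"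
  shows "fst st \<noteq> {#} \<and> set_mset (fst st) \<subseteq> R"
proof -
  obtain CM C Rej where st0: "st0 = (CM, C, Rej)" by (cases st0) auto
  define cand where "cand = {C' \<in> Ctx. connected C C' \<and> C' \<notin> Rej}"
  have fc: "finite cand" unfolding cand_def using assms(1) by simp
  have eq: "rw_step Ctx test n st0 = (if size CM > n \<or> cand = {} then return_pmf st0
      else bind_pmf (pmf_of_set cand) (\<lambda>Ci.
        return_pmf (if test Ci then (add_mset Ci CM, Ci, Rej) else (CM, C, insert Ci Rej))))"
    unfolding rw_step_def st0 cand_def Let_def by simp
  show ?thesis
  proof (cases "size CM > n \<or> cand = {}")
    case True
    then have "st = st0" using assms(4) unfolding eq by simp
    then show ?thesis using assms(3) by simp
  next
    case False
    then obtain Ci where Ci: "Ci \<in> cand"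
      and st: "st = (if test Ci then (add_mset Ci CM, Ci, Rej) else (CM, C, insert Ci Rej))"
      using assms(4) fc unfolding eq by auto
    have "Ci \<in> Ctx" using Ci cand_def by auto
    then show ?thesis using st assms(2,3) st0 by auto
  qed
qed

lemma rw_walk_inv:
  assumes "finite Ctx" "\<forall>C\<in>Ctx. test C \<longrightarrow> C \<in> R" "CV \<in> R"
    and "CM \<in> set_pmf (rw_walk Ctx test n CV)"
  shows "CM \<noteq> {#} \<and> set_mset CM \<subseteq> R"
proof -
  define g where "g = (\<lambda>p. bind_pmf p (rw_step Ctx test n))"
  have "\<forall>st\<in>set_pmf ((g ^^ k) (return_pmf ({#CV#}, CV, {}))). fst st \<noteq> {#} \<and> set_mset (fst st) \<subseteq> R" for k
  proof (induction k)
    case 0 then show ?case using assms(3) by simp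
  next
    case (Suc k)
    show ?case
    proof
      fix st assume "st \<in> set_pmf ((g ^^ Suc k) (return_pmf ({#CV#}, CV, {})))"
      then obtain st0 where "st0 \<in> set_pmf ((g ^^ k) (return_pmf ({#CV#}, CV, {})))"
        and "st \<in> set_pmf (rw_step Ctx test n st0)" by (auto simp: g_def)
      then show "fst st \<noteq> {#} \<and> set_mset (fst st) \<subseteq> R"
        using rw_step_inv[OF assms(1,2)] Suc.IH by blast
    qed
  qed
  moreover obtain st where "st \<in> set_pmf ((g ^^ (n + card Ctx + 1)) (return_pmf ({#CV#}, CV, {})))"
    and "CM = fst st" using assms(4) unfolding rw_walk_def g_def[symmetric] by auto
  ultimately show ?thesis by (metis (no_types, lifting))
qed


theorem theorem6:
  fixes m :: nat and sz :: "nat \<Rightarrow> nat" and val :: "'r \<Rightarrow> nat \<Rightarrow> nat"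
    and f :: "'r multiset \<Rightarrow> 'r \<Rightarrow> bool" and V :: 'r
    and u :: "'r multiset \<Rightarrow> ctx \<Rightarrow> real" and \<epsilon>1 :: real and n :: nat and CV :: ctx
  assumes "\<epsilon>1 > 0"
    and "sensitivity {C \<in> ctx_space m sz. matches m val V C} u \<le> 1"
    and "CV \<in> ctx_space m sz"
    and "matches m val V CV"
  shows "ocdp (2 * \<epsilon>1) (\<lambda>D. COE m sz val f D V) (rws_mech m sz val f V u \<epsilon>1 n CV)"
  unfolding ocdp_def
proof (intro allI impI)
  fix D1 D2 S
  assume fn: "f_neighbors (\<lambda>D. COE m sz val f D V) D1 D2"
  then have nb: "neighbors D1 D2" and coe: "COE m sz val f D1 V = COE m sz val f D2 V"
    unfolding f_neighbors_def by auto
  define Ctx where "Ctx = ctx_space m sz"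
  define R where "R = {C \<in> Ctx. matches m val V C}"
  define s where "s = sensitivity R u"
  define du where "du = real_of_ereal s"
  have CVR: "CV \<in> R" using assms(3,4) R_def Ctx_def by auto
  have sup: "ereal \<bar>u D1' C - u D2' C\<bar> \<le> s" if "neighbors D1' D2'" "C \<in> R" for D1' D2' C
    unfolding s_def sensitivity_def
    by (rule SUP_upper2[where i="(D1', D2', C)"]) (use that in auto)
  have "neighbors {#} {#V#}" unfolding neighbors_def by auto
  from sup[OF this CVR] have s0: "0 \<le> s" by (meson abs_ge_zero ereal_less_eq(5) order_trans)
  have s1: "s \<le> 1" using assms(2) by (simp add: s_def R_def Ctx_def)
  have sdu: "s = ereal du" using s0 s1 unfolding du_def by (cases s) auto
  have du0: "0 \<le> du" using s0 sdu by simp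
  have bnd: "\<bar>u D1' C - u D2' C\<bar> \<le> du" if "neighbors D1' D2'" "C \<in> R" for D1' D2' C
    using sup[OF that] sdu by simp
  define k where "k = exp (\<epsilon>1 / 2)"
  have k0: "0 \<le> k" by (simp add: k_def)
  have wb: "exp_weight \<epsilon>1 du (util_ext m val V u Da C) \<le> k * exp_weight \<epsilon>1 du (util_ext m val V u Db C)"
    if "neighbors Da Db" "C \<in> R" for Da Db C
  proof -
    have mt: "matches m val V C" using that R_def by auto
    have "\<epsilon>1 * u Da C / (2 * du) \<le> \<epsilon>1 / 2 + \<epsilon>1 * u Db C / (2 * du)"
    proof (cases "du = 0")
      case True then show ?thesis using assms(1) by simp
    next
      case False
      then have dp: "0 < du" using du0 by simp
      have "u Da C - u Db C \<le> du" using bnd[OF that] by simp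
      then have "\<epsilon>1 * (u Da C - u Db C) \<le> \<epsilon>1 * du" using assms(1) by (intro mult_left_mono) auto
      then show ?thesis using dp by (simp add: field_simps)
    qed
    then have "exp (\<epsilon>1 * u Da C / (2 * du)) \<le> exp (\<epsilon>1 / 2 + \<epsilon>1 * u Db C / (2 * du))" by simp
    then show ?thesis using mt by (simp add: util_ext_def exp_weight_def k_def exp_add)
  qed
  have nb': "neighbors D2 D1" using nb unfolding neighbors_def by auto
  define W where "W = rw_walk Ctx (\<lambda>C. C \<in> COE m sz val f D1 V) n CV"
  have M1: "rws_mech m sz val f V u \<epsilon>1 n CV D1 = bind_pmf W (\<lambda>CM. exp_mech \<epsilon>1 du (util_ext m val V u D1) CM)"
    unfolding rws_mech_def W_def du_def s_def R_def Ctx_def Let_def by simp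
  have M2: "rws_mech m sz val f V u \<epsilon>1 n CV D2 = bind_pmf W (\<lambda>CM. exp_mech \<epsilon>1 du (util_ext m val V u D2) CM)"
    unfolding rws_mech_def W_def du_def s_def R_def Ctx_def Let_def coe by simp
  have testR: "\<forall>C\<in>Ctx. C \<in> COE m sz val f D1 V \<longrightarrow> C \<in> R"
    unfolding R_def COE_def Ctx_def matches_def restrict_ds_def by auto
  have "measure_pmf.prob (bind_pmf W (\<lambda>CM. exp_mech \<epsilon>1 du (util_ext m val V u D1) CM)) S
      \<le> exp (2 * \<epsilon>1) * measure_pmf.prob (bind_pmf W (\<lambda>CM. exp_mech \<epsilon>1 du (util_ext m val V u D2) CM)) S"
  proof (rule prob_bind_le)
    fix CM S assume "CM \<in> set_pmf W"
    then have inv: "CM \<noteq> {#}" "set_mset CM \<subseteq> R"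
      using rw_walk_inv[OF _ testR CVR] finite_ctx_space unfolding W_def Ctx_def by blast+
    have fin1: "\<forall>r\<in>#CM. \<exists>y. util_ext m val V u D1 r = ereal y"
      using inv(2) unfolding R_def util_ext_def by auto
    have fin2: "\<forall>r\<in>#CM. \<exists>y. util_ext m val V u D2 r = ereal y"
      using inv(2) unfolding R_def util_ext_def by auto
    have pt: "pmf (exp_mech \<epsilon>1 du (util_ext m val V u D1) CM) r
        \<le> exp (2 * \<epsilon>1) * pmf (exp_mech \<epsilon>1 du (util_ext m val V u D2) CM) r" for r
    proof -
      have "pmf (exp_mech \<epsilon>1 du (util_ext m val V u D1) CM) r
          \<le> k * k * pmf (exp_mech \<epsilon>1 du (util_ext m val V u D2) CM) r"
        using inv(2) wb[OF nb] wb[OF nb'] k0 by (intro exp_mech_ratio[OF inv(1) fin1 fin2]) (auto simp: k_def[symmetric])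
      also have "k * k = exp \<epsilon>1" unfolding k_def exp_add[symmetric] by simp
      also have "exp \<epsilon>1 * pmf (exp_mech \<epsilon>1 du (util_ext m val V u D2) CM) r
          \<le> exp (2 * \<epsilon>1) * pmf (exp_mech \<epsilon>1 du (util_ext m val V u D2) CM) r"
        using assms(1) by (intro mult_right_mono) auto
      finally show ?thesis .
    qed
    show "measure_pmf.prob (exp_mech \<epsilon>1 du (util_ext m val V u D1) CM) S
        \<le> exp (2 * \<epsilon>1) * measure_pmf.prob (exp_mech \<epsilon>1 du (util_ext m val V u D2) CM) S"
      by (rule prob_le_pointwise[OF _ exp_mech_set[OF inv(1) fin1] exp_mech_set[OF inv(1) fin2] pt]) simp
  qed simp
  then show "measure_pmf.prob (rws_mech m sz val f V u \<epsilon>1 n CV D1) S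
      \<le> exp (2 * \<epsilon>1) * measure_pmf.prob (rws_mech m sz val f V u \<epsilon>1 n CV D2) S"
    unfolding M1 M2 .
qed

end
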